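(* Let $u\in U$, $w'\in W$, and let $y_1,\dots,y_N\in F$ and $\pi_1,\dots,\pi_{N+1}\in W$ be produced by the decomposition procedure below. Define $\sigma_{N+1}=w'$ and, for $k=N,\dots,1$, $\sigma_k=\sigma_{k+1}$ if step $k$ is of type A and $\sigma_k=s_{i_k}\sigma_{k+1}$ if step $k$ is of type B; equivalently \[ \sigma_k=\Big[\prod_{j=k}^{N}\begin{cases}1&\text{if step }j\text{ is of type A}\\ s_{i_j}&\text{if step }j\text{ is of type B}\end{cases}\Big]w' . \] Then for every $k=1,\dots,N+1$, as elements of $W$, \[ \pi_k=s_{i_N}s_{i_{N-1}}\cdots s_{i_k}\,\sigma_k , \] and in particular $\pi_1=w_0\sigma_1$.
   Context: Let $F$ be a non-archimedean local field with ring of integers $\mathcal{O}$, maximal ideal $\mathfrak{p}$, unit group $\mathcal{O}^\times$, residue field $\mathbb{F}_q$. Let $G$ be a split connected reductive group over $F$ with split maximal torus $T$, irreducible root system $\Phi$, positive roots $\Phi^+$, $\Phi^-=-\Phi^+$, simple roots $\alpha_i$, coroots $\alpha^\vee$, Weyl group $W$ with simple reflections $s_i$ acting on $\Phi$. Let $n\ge1$ with $q\equiv1\pmod{2n}$ and $\widetilde G$ an $n$-fold metaplectic cover of $G(F)$ (central extension by $\mu_n$); $\widetilde H$ = preimage of $H$. The cover splits over $K=G(\mathcal{O})$ and unipotent subgroups. Steinberg generators $e_\alpha(x)$, $w_\alpha(x)=e_\alpha(x)e_{-\alpha}(-x^{-1})$, $h_\alpha(x)=w_\alpha(x)w_\alpha(-1)\in\widetilde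 T$, with $h_\alpha(x)e_\beta(y)h_\alpha(x)^{-1}=e_\beta(x^{\langle\beta,\alpha^\vee\rangle}y)$. $U^+$ (resp. $U=U^-$) is generated by $e_\alpha(x)$ (resp. $e_{-\alpha}(x)$), $\alpha\in\Phi^+$, $x\in F$. $J$ = preimage of $B^-(\mathbb{F}_q)$ under $G(\mathcal{O})\to G(\mathbb{F}_q)$. Weyl elements are identified with fixed representatives in $K$ ($s_i\leftrightarrow w_{\alpha_i}(-1)$; $s_\alpha=vs_iv^{-1}$ if $\alpha=v(\alpha_i)\in\Phi^+$). Fix a reduced word $w_0=s_{i_1}\cdots s_{i_N}$ of the longest element, $\gamma_j=s_{i_N}\cdots s_{i_{j+1}}(\alpha_{i_j})$, so $\Phi^+=\{\gamma_1,\dots,\gamma_N\}$. For $0\le k\le N$, $G_k$ = set of products $\big(\prod_{j=1}^{k-1}e_{-\gamma_j}(t_j)\big)\big(\prod_{j=k+1}^N e_{\gamma_j}(t_j)\big)$, $t_j\in F$. Fact: for $z\in F$, $g\in G_k$ there is a unique $g'\in G_k$ with $e_{-\gamma_k}(z)g=g'e_{-\gamma_k}(z)$. Decomposition procedure. Write $u=e_{-\gamma_1}(x_1)\cdots e_{-\gamma_N}(x_N)$ ($x_j\in F$ unique). Put $p_{N+1}=h_{N+1}=j_{N+1}=1$, $\pi_{N+1}=w'$, $t_N=0$. For $k=N,N-1,\dots,1$: the element $p_{k+1}$ has the form $e_{-\gamma_k}(t_k)p'_k$ with $t_k\in F$, $p'_k\in G_k$ uniquely determined; let $p''_k\in G_k$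 satisfy $e_{-\gamma_k}(x_k+t_k)p'_k=p''_ke_{-\gamma_k}(x_k+t_k)$; define $y_k\in F$ by $h_{k+1}^{-1}e_{-\gamma_k}(x_k+t_k)h_{k+1}=e_{-\gamma_k}(y_k)$. Step $k$ is of type A if $y_k\notin\mathcal{O}$, or $y_k\in\mathcal{O}^\times$ and $\pi_{k+1}^{-1}(\gamma_k)\in\Phi^-$; otherwise ($y_k\in\mathfrak{p}$, or $y_k\in\mathcal{O}^\times$ and $\pi_{k+1}^{-1}(\gamma_k)\in\Phi^+$) of type B. Type A: $h_k=h_{k+1}h_{\gamma_k}(y_k^{-1})$, $\pi_k=s_{\gamma_k}\pi_{k+1}$, $j_k=e_{\pi_{k+1}^{-1}(\gamma_k)}(y_k^{-1})j_{k+1}$, $p_k=p''_k\,h_ke_{\gamma_k}(y_k)h_k^{-1}$. Type B: $h_k=h_{k+1}$, $\pi_k=\pi_{k+1}$, $j_k=e_{-\pi_{k+1}^{-1}(\gamma_k)}(y_k)j_{k+1}$, $p_k=p''_k$. *)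

theory Defs
  imports "HOL-Analysis.Analysis"
begin

definition refl :: "'a::real_inner \<Rightarrow> 'a \<Rightarrow> 'a" where
  "refl a x = x - (2 * (x \<bullet> a) / (a \<bullet> a)) *\<^sub>R a"

definition root_system :: "'a::euclidean_space set \<Rightarrow> bool" where
  "root_system R \<longleftrightarrow> finite R \<and> 0 \<notin> R \<and> span R = UNIV
     \<and> (\<forall>a\<in>R. refl a ` R = R)
     \<and> (\<forall>a\<in>R. \<forall>b\<in>R. 2 * (b \<bullet> a) / (a \<bullet> a) \<in> \<int>)
     \<and> (\<forall>a\<in>R. \<forall>c::real. c *\<^sub>R a \<in> R \<longrightarrow> c = 1 \<or> c = -1)"

definition irreducible_rs :: "'a::euclidean_space set \<Rightarrow> bool" where
  "irreducible_rs R \<longleftrightarrow> \<not> (\<exists>A B. A \<noteq> {} \<and> B \<noteq> {} \<and> A \<union> B = R \<and> A \<inter> B = {}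
                                 \<and> (\<forall>a\<in>A. \<forall>b\<in>B. a \<bullet> b = 0))"

definition simple_system :: "'a::euclidean_space set \<Rightarrow> ('i::finite \<Rightarrow> 'a) \<Rightarrow> bool" where
  "simple_system R alpha \<longleftrightarrow> inj alpha \<and> range alpha \<subseteq> R \<and> independent (range alpha)
     \<and> (\<forall>b\<in>R. \<exists>c. b = (\<Sum>i\<in>UNIV. c i *\<^sub>R alpha i)
                  \<and> ((\<forall>i. c i \<ge> 0) \<or> (\<forall>i. c i \<le> 0)))"

definition pos_roots :: "'a::euclidean_space set \<Rightarrow> ('i::finite \<Rightarrow> 'a) \<Rightarrow> 'a set" where
  "pos_roots R alpha = {b\<in>R. \<exists>c. b = (\<Sum>i\<in>UNIV. c i *\<^sub>R alpha i) \<and> (\<forall>i. c i \<ge> 0)}"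

definition wprod :: "('i \<Rightarrow> 'a::real_inner) \<Rightarrow> 'i list \<Rightarrow> 'a \<Rightarrow> 'a" where
  "wprod alpha xs = foldr (\<lambda>j w. refl (alpha j) \<circ> w) xs id"

definition weyl :: "('i \<Rightarrow> 'a::real_inner) \<Rightarrow> ('a \<Rightarrow> 'a) set" where
  "weyl alpha = range (wprod alpha)"

definition wlength :: "('i \<Rightarrow> 'a::real_inner) \<Rightarrow> ('a \<Rightarrow> 'a) \<Rightarrow> nat" where
  "wlength alpha w = (LEAST n. \<exists>xs. length xs = n \<and> wprod alpha xs = w)"

definition reduced_word :: "('i \<Rightarrow> 'a::real_inner) \<Rightarrow> 'i list \<Rightarrow> bool" where
  "reduced_word alpha xs \<longleftrightarrow> length xs = wlength alpha (wprod alpha xs)"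

definition longest_element :: "('i \<Rightarrow> 'a::real_inner) \<Rightarrow> ('a \<Rightarrow> 'a) \<Rightarrow> bool" where
  "longest_element alpha w0 \<longleftrightarrow> w0 \<in> weyl alpha \<and> (\<forall>v\<in>weyl alpha. wlength alpha v \<le> wlength alpha w0)"

text \<open>For a word ii 1, ..., ii N: the product s_{i_b} s_{i_(b-1)} ... s_{i_a} (empty if a > b).\<close>
definition rprod :: "('i \<Rightarrow> 'a::real_inner) \<Rightarrow> (nat \<Rightarrow> 'i) \<Rightarrow> nat \<Rightarrow> nat \<Rightarrow> 'a \<Rightarrow> 'a" where
  "rprod alpha ii a b = wprod alpha (rev (map ii [a..<Suc b]))"

definition gamma :: "('i \<Rightarrow> 'a::real_inner) \<Rightarrow> (nat \<Rightarrow> 'i) \<Rightarrow> nat \<Rightarrow> nat \<Rightarrow> 'a" where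
  "gamma alpha ii N j = rprod alpha ii (Suc j) N (alpha (ii j))"

end

theory Submission
  imports Defs
begin


lemma refl_zero: "refl 0 x = x" by (simp add: refl_def)

lemma refl_refl: "refl a (refl a x) = x"
proof (cases "a = 0")
  case True then show ?thesis by (simp add: refl_zero)
next
  case False
  then have "a \<bullet> a \<noteq> 0" by simp
  then show ?thesis by (simp add: refl_def inner_diff_left algebra_simps)
qed

lemma refl_comp: "refl a \<circ> refl a = id" by (rule ext) (simp add: refl_refl)

lemma refl_linear: "linear (refl a)"
  by (rule linearI) (simp_all add: refl_def inner_add_left algebra_simps add_divide_distrib scaleR_add_left)

lemma refl_inner: "refl a x \<bullet> refl a y = x \<bullet> y"
proof (cases "a = 0")
  case True then show ?thesis by (simp add: refl_zero)
next
  case False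
  then have "a \<bullet> a \<noteq> 0" by simp
  then show ?thesis by (simp add: refl_def inner_diff_left inner_diff_right inner_commute algebra_simps power2_eq_square)
qed

lemma refl_self: "refl a a = - a"
proof (cases "a = 0")
  case True then show ?thesis by (simp add: refl_zero)
next
  case False
  then have "a \<bullet> a \<noteq> 0" by simp
  then show ?thesis by (simp add: refl_def scaleR_2)
qed

lemma wprod_Nil[simp]: "wprod alpha [] = id" by (simp add: wprod_def)
lemma wprod_Cons[simp]: "wprod alpha (j # xs) = refl (alpha j) \<circ> wprod alpha xs" by (simp add: wprod_def)
lemma wprod_append: "wprod alpha (xs @ ys) = wprod alpha xs \<circ> wprod alpha ys"
  by (induction xs) auto
lemma wprod_snoc: "wprod alpha (xs @ [i]) = wprod alpha xs \<circ> refl (alpha i)"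
  by (simp add: wprod_append)

lemma wprod_linear: "linear (wprod alpha xs)"
proof (induction xs)
  case Nil show ?case using linear_id by (simp add: id_def)
next
  case (Cons x xs) show ?case using linear_compose[OF Cons.IH refl_linear, of "alpha x"] by (simp add: o_def)
qed

lemma wprod_inner: "wprod alpha xs x \<bullet> wprod alpha xs y = x \<bullet> y"
  by (induction xs arbitrary: x y) (auto simp: refl_inner)

lemma refl_conj:
  assumes "linear w" "\<And>x y. w x \<bullet> w y = x \<bullet> y"
  shows "refl (w a) \<circ> w = w \<circ> refl a"
proof
  fix x
  show "(refl (w a) \<circ> w) x = (w \<circ> refl a) x"
    using assms by (simp add: refl_def linear_diff linear_scale)
qed

lemma wprod_rev_inv: "wprod alpha (rev xs) \<circ> wprod alpha xs = id"
proof (induction xs)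
  case (Cons x xs)
  have "wprod alpha (rev (x # xs)) \<circ> wprod alpha (x # xs) =
        wprod alpha (rev xs) \<circ> (refl (alpha x) \<circ> refl (alpha x)) \<circ> wprod alpha xs"
    by (simp add: wprod_append o_assoc)
  also have "\<dots> = wprod alpha (rev xs) \<circ> wprod alpha xs" by (simp add: refl_comp)
  also have "\<dots> = id" by (rule Cons.IH)
  finally show ?case .
qed simp



locale RS =
  fixes R :: "'a::euclidean_space set" and alpha :: "'i::finite \<Rightarrow> 'a"
  assumes rs: "root_system R" and ss: "simple_system R alpha"
begin

abbreviation "Pos \<equiv> pos_roots R alpha"

lemma finR: "finite R" and zeroR: "0 \<notin> R"
  and reflR: "a \<in> R \<Longrightarrow> refl a ` R = R"
  and redR: "a \<in> R \<Longrightarrow> c *\<^sub>R a \<in> R \<Longrightarrow> c = 1 \<or> c = -1"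
  using rs unfolding root_system_def by auto

lemma alpha_inj: "inj alpha" and alpha_R: "alpha i \<in> R" and alpha_ind: "independent (range alpha)"
  and ss_dich: "b \<in> R \<Longrightarrow> \<exists>c. b = (\<Sum>i\<in>UNIV. c i *\<^sub>R alpha i) \<and> ((\<forall>i. c i \<ge> 0) \<or> (\<forall>i. c i \<le> 0))"
  using ss unfolding simple_system_def by auto

lemma coeff_zero:
  assumes "(\<Sum>i\<in>UNIV. e i *\<^sub>R alpha i) = 0" shows "e = (\<lambda>_. 0)"
proof -
  have "(\<Sum>v\<in>range alpha. e (inv alpha v) *\<^sub>R v) = (\<Sum>i\<in>UNIV. e (inv alpha (alpha i)) *\<^sub>R alpha i)"
    by (simp add: sum.reindex[OF alpha_inj])
  also have "\<dots> = 0" using assms by (simp add: inv_f_f[OF alpha_inj])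
  finally have z: "(\<Sum>v\<in>range alpha. e (inv alpha v) *\<^sub>R v) = 0" .
  have "\<forall>c. (\<Sum>v\<in>range alpha. c v *\<^sub>R v) = 0 \<longrightarrow> (\<forall>v\<in>range alpha. c v = 0)"
    using independent_explicit[THEN iffD1, OF alpha_ind] by blast
  from spec[where x="\<lambda>v. e (inv alpha v)", OF this] z
  have "\<forall>v\<in>range alpha. e (inv alpha v) = 0" by blast
  then show ?thesis by (auto simp: inv_f_f[OF alpha_inj])
qed

lemma coeff_unique:
  assumes "(\<Sum>i\<in>UNIV. c i *\<^sub>R alpha i) = (\<Sum>i\<in>UNIV. d i *\<^sub>R alpha i)" shows "c = d"
proof -
  have "(\<Sum>i\<in>UNIV. (c i - d i) *\<^sub>R alpha i) = 0"
    using assms by (simp add: scaleR_diff_left sum_subtractf)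
  from coeff_zero[OF this] show ?thesis by (auto simp: fun_eq_iff dest: fun_cong)
qed

lemma alpha_nz: "alpha i \<noteq> 0" using alpha_R[of i] zeroR by auto

lemma sum_delta_k: "(\<Sum>j\<in>UNIV. (if j = i then k else 0) *\<^sub>R alpha j) = k *\<^sub>R alpha i"
proof -
  have h: "\<And>j. (if j = i then k else 0) *\<^sub>R alpha j = (if j = i then k *\<^sub>R alpha j else 0)" by simp
  have "(\<Sum>j\<in>UNIV. (if j = i then k else 0) *\<^sub>R alpha j) = (\<Sum>j\<in>UNIV. (if j = i then k *\<^sub>R alpha j else 0))"
    by (rule sum.cong[OF refl h])
  also have "\<dots> = k *\<^sub>R alpha i" using sum.delta[of UNIV i "\<lambda>j. k *\<^sub>R alpha j"] by simp
  finally show ?thesis .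
qed

lemma sum_delta_alpha: "(\<Sum>j\<in>UNIV. (if j = i then 1 else 0) *\<^sub>R alpha j) = alpha i"
  using sum_delta_k[of i 1] by (simp only: scaleR_one)

lemma posI: "b \<in> R \<Longrightarrow> b = (\<Sum>i\<in>UNIV. c i *\<^sub>R alpha i) \<Longrightarrow> \<forall>i. c i \<ge> 0 \<Longrightarrow> b \<in> Pos"
  by (auto simp: pos_roots_def)

lemma alpha_pos: "alpha i \<in> Pos"
proof -
  have "\<forall>j. (if j = i then 1 else 0) \<ge> (0::real)" by simp
  then show ?thesis by (rule posI[OF alpha_R sum_delta_alpha[symmetric]])
qed

lemma neg_R: assumes "b \<in> R" shows "- b \<in> R"
proof -
  have "refl b b \<in> refl b ` R" using assms by (rule imageI)
  then show ?thesis using reflR[OF assms] refl_self[of b] by simp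
qed

lemma pos_R: "b \<in> Pos \<Longrightarrow> b \<in> R" by (simp add: pos_roots_def)

lemma dich: assumes "b \<in> R" shows "b \<in> Pos \<or> - b \<in> Pos"
proof -
  obtain c where c: "b = (\<Sum>i\<in>UNIV. c i *\<^sub>R alpha i)" "(\<forall>i. c i \<ge> 0) \<or> (\<forall>i. c i \<le> 0)"
    using ss_dich[OF assms] by blast
  show ?thesis
  proof (cases "\<forall>i. c i \<ge> 0")
    case True then show ?thesis using c assms by (auto simp: pos_roots_def)
  next
    case False
    then have "\<forall>i. - c i \<ge> 0" using c by auto
    moreover have "- b = (\<Sum>i\<in>UNIV. (- c i) *\<^sub>R alpha i)"
      unfolding c(1) scaleR_minus_left sum_negf ..
    ultimately have "- b \<in> Pos" using posI[OF neg_R[OF assms], of "\<lambda>i. - c i"] by blast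
    then show ?thesis by blast
  qed
qed

lemma not_both: assumes "b \<in> Pos" "- b \<in> Pos" shows False
proof -
  obtain c where c: "b = (\<Sum>i\<in>UNIV. c i *\<^sub>R alpha i)" "\<forall>i. c i \<ge> 0" "b \<in> R"
    using assms(1) by (auto simp: pos_roots_def)
  obtain d where d: "- b = (\<Sum>i\<in>UNIV. d i *\<^sub>R alpha i)" "\<forall>i. d i \<ge> 0"
    using assms(2) by (auto simp: pos_roots_def)
  have "(\<Sum>i\<in>UNIV. (c i + d i) *\<^sub>R alpha i) = 0"
    using c d by (simp add: scaleR_add_left sum.distrib flip: c(1) d(1))
  from coeff_zero[OF this] have "\<forall>i. c i = 0" using c d
    by (metis add_nonneg_eq_0_iff)
  then have "b = 0" using c by simp
  then show False using c zeroR by simp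
qed

lemma wprod_R: "b \<in> R \<Longrightarrow> wprod alpha xs b \<in> R"
proof (induction xs arbitrary: b)
  case (Cons x xs)
  then have "wprod alpha xs b \<in> R" by blast
  then show ?case using reflR[OF alpha_R[of x]] by auto
qed simp

lemma simple_perm:
  assumes "b \<in> Pos" "b \<noteq> alpha i" shows "refl (alpha i) b \<in> Pos"
proof -
  obtain c where c: "b = (\<Sum>j\<in>UNIV. c j *\<^sub>R alpha j)" "\<forall>j. c j \<ge> 0" "b \<in> R"
    using assms(1) by (auto simp: pos_roots_def)
  define k where "k = 2 * (b \<bullet> alpha i) / (alpha i \<bullet> alpha i)"
  have sb: "refl (alpha i) b = b - k *\<^sub>R alpha i" by (simp add: refl_def k_def)
  have sbR: "refl (alpha i) b \<in> R" using reflR[OF alpha_R[of i]] c(3) by blast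
  have e: "refl (alpha i) b = (\<Sum>j\<in>UNIV. (c j - (if j = i then k else 0)) *\<^sub>R alpha j)"
  proof -
    have "(\<Sum>j\<in>UNIV. (c j - (if j = i then k else 0)) *\<^sub>R alpha j) = (\<Sum>j\<in>UNIV. c j *\<^sub>R alpha j) - k *\<^sub>R alpha i"
      unfolding scaleR_diff_left sum_subtractf sum_delta_k ..
    then show ?thesis using sb c(1) by simp
  qed
  show ?thesis
  proof (rule ccontr)
    assume nP: "refl (alpha i) b \<notin> Pos"
    obtain c' where c': "refl (alpha i) b = (\<Sum>j\<in>UNIV. c' j *\<^sub>R alpha j)" "(\<forall>j. c' j \<ge> 0) \<or> (\<forall>j. c' j \<le> 0)"
      using ss_dich[OF sbR] by blast
    have cc: "c' = (\<lambda>j. c j - (if j = i then k else 0))"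
      by (rule coeff_unique[OF trans[OF c'(1)[symmetric] e]])
    have "\<not> (\<forall>j. c' j \<ge> 0)"
    proof
      assume "\<forall>j. c' j \<ge> 0"
      then have "refl (alpha i) b \<in> Pos" by (rule posI[OF sbR c'(1)])
      then show False using nP by contradiction
    qed
    then have neg: "\<forall>j. c' j \<le> 0" using c'(2) by blast
    have z: "c j = 0" if "j \<noteq> i" for j
    proof -
      have "c' j = c j" using cc that by simp
      then show ?thesis using neg c(2) by (metis order_antisym)
    qed
    have "b = (\<Sum>j\<in>UNIV. (if j = i then c i else 0) *\<^sub>R alpha j)"
      unfolding c(1) by (rule sum.cong[OF refl]) (simp add: z)
    then have bi: "b = c i *\<^sub>R alpha i" using sum_delta_k[of i "c i"] by simp
    then have "c i = 1 \<or> c i = -1" using redR[OF alpha_R[of i]] c(3) by simp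
    then have "c i = 1" using c(2) by (metis le_minus_one_simps(3))
    then show False using bi assms(2) by simp
  qed
qed

end


context RS begin

lemma wprod_neg: "wprod alpha xs (- x) = - wprod alpha xs x"
  using linear_neg[OF wprod_linear] by blast

lemma deletion:
  "wprod alpha xs (alpha i) \<notin> Pos \<Longrightarrow>
   \<exists>ys. length ys < length xs \<and> wprod alpha ys = wprod alpha xs \<circ> refl (alpha i)"
proof (induction xs)
  case Nil then show ?case using alpha_pos by simp
next
  case (Cons x xs)
  show ?case
  proof (cases "wprod alpha xs (alpha i) \<in> Pos")
    case False
    then obtain ys where "length ys < length xs" "wprod alpha ys = wprod alpha xs \<circ> refl (alpha i)"
      using Cons.IH by blast
    then show ?thesis by (intro exI[of _ "x # ys"]) (simp add: o_assoc)
  next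
    case True
    have "refl (alpha x) (wprod alpha xs (alpha i)) \<notin> Pos" using Cons.prems by simp
    then have eq: "wprod alpha xs (alpha i) = alpha x" using simple_perm[OF True] by blast
    have c: "refl (wprod alpha xs (alpha i)) \<circ> wprod alpha xs = wprod alpha xs \<circ> refl (alpha i)"
      by (rule refl_conj[OF wprod_linear wprod_inner])
    have "wprod alpha (x # xs) \<circ> refl (alpha i) = refl (alpha x) \<circ> (refl (alpha x) \<circ> wprod alpha xs)"
      using c eq by (simp add: o_assoc)
    also have "\<dots> = wprod alpha xs" by (simp only: o_assoc refl_comp id_o)
    finally have f: "wprod alpha (x # xs) \<circ> refl (alpha i) = wprod alpha xs" .
    have "length xs < length (x # xs)" by simp
    then show ?thesis using f by metis
  qed
qed

lemma wlength_le: "wlength alpha (wprod alpha xs) \<le> length xs"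
  unfolding wlength_def by (rule Least_le) blast

lemma wlength_ex: "\<exists>zs. length zs = wlength alpha (wprod alpha xs) \<and> wprod alpha zs = wprod alpha xs"
  unfolding wlength_def by (rule LeastI_ex) blast

lemma reduced_snoc_pos:
  assumes "reduced_word alpha (xs @ [i])" shows "wprod alpha xs (alpha i) \<in> Pos"
proof (rule ccontr)
  assume "wprod alpha xs (alpha i) \<notin> Pos"
  then obtain ys where "length ys < length xs" "wprod alpha ys = wprod alpha (xs @ [i])"
    using deletion by (auto simp: wprod_snoc)
  then show False using assms wlength_le[of ys] by (simp add: reduced_word_def)
qed

lemma reduced_prefix:
  assumes "reduced_word alpha (xs @ ys)" shows "reduced_word alpha xs"
proof -
  obtain zs where z: "length zs = wlength alpha (wprod alpha xs)" "wprod alpha zs = wprod alpha xs"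
    using wlength_ex by blast
  have "wprod alpha (zs @ ys) = wprod alpha (xs @ ys)" using z by (simp add: wprod_append)
  then have "length xs + length ys \<le> length zs + length ys"
    using assms wlength_le[of "zs @ ys"] by (simp add: reduced_word_def)
  then show ?thesis using z wlength_le[of xs] by (simp add: reduced_word_def)
qed

definition Inv :: "('a \<Rightarrow> 'a) \<Rightarrow> 'a set" where
  "Inv w = {b \<in> Pos. w b \<notin> Pos}"

lemma finite_Inv: "finite (Inv w)"
  by (rule finite_subset[OF _ finR]) (auto simp: Inv_def pos_roots_def)

lemma Inv_sub: "Inv (wprod alpha xs \<circ> refl (alpha i)) \<subseteq> insert (alpha i) (refl (alpha i) ` Inv (wprod alpha xs))"
proof
  fix g assume g: "g \<in> Inv (wprod alpha xs \<circ> refl (alpha i))"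
  show "g \<in> insert (alpha i) (refl (alpha i) ` Inv (wprod alpha xs))"
  proof (cases "g = alpha i")
    case False
    then have "refl (alpha i) g \<in> Inv (wprod alpha xs)" using g simple_perm by (auto simp: Inv_def)
    then show ?thesis using refl_refl[of "alpha i" g] by (metis image_eqI insertI2)
  qed simp
qed

lemma Inv_le: "card (Inv (wprod alpha xs \<circ> refl (alpha i))) \<le> card (Inv (wprod alpha xs)) + 1"
proof -
  have "card (Inv (wprod alpha xs \<circ> refl (alpha i))) \<le> card (insert (alpha i) (refl (alpha i) ` Inv (wprod alpha xs)))"
    by (rule card_mono[OF _ Inv_sub]) (simp add: finite_Inv)
  also have "\<dots> \<le> card (refl (alpha i) ` Inv (wprod alpha xs)) + 1"
    by (simp add: card_insert_le_m1 finite_Inv card_insert_if)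
  also have "\<dots> \<le> card (Inv (wprod alpha xs)) + 1" using card_image_le[OF finite_Inv] by simp
  finally show ?thesis .
qed

lemma Inv_eq:
  assumes "wprod alpha xs (alpha i) \<in> Pos"
  shows "card (Inv (wprod alpha xs \<circ> refl (alpha i))) = card (Inv (wprod alpha xs)) + 1"
proof -
  let ?w = "wprod alpha xs"
  have sup: "insert (alpha i) (refl (alpha i) ` Inv ?w) \<subseteq> Inv (?w \<circ> refl (alpha i))"
  proof
    fix g assume g: "g \<in> insert (alpha i) (refl (alpha i) ` Inv ?w)"
    show "g \<in> Inv (?w \<circ> refl (alpha i))"
    proof (cases "g = alpha i")
      case True
      have "?w (refl (alpha i) (alpha i)) = - ?w (alpha i)" by (simp add: refl_self wprod_neg)
      then show ?thesis using True assms alpha_pos not_both by (auto simp: Inv_def)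
    next
      case False
      then obtain b where b: "b \<in> Inv ?w" "g = refl (alpha i) b" using g by auto
      have "b \<noteq> alpha i" using b assms by (auto simp: Inv_def)
      then show ?thesis using b simple_perm by (auto simp: Inv_def refl_refl)
    qed
  qed
  have ni: "alpha i \<notin> refl (alpha i) ` Inv ?w"
  proof
    assume "alpha i \<in> refl (alpha i) ` Inv ?w"
    then obtain b where "b \<in> Inv ?w" "alpha i = refl (alpha i) b" by auto
    then have "b = - alpha i" "b \<in> Pos" using refl_refl[of "alpha i" b] refl_self[of "alpha i"] by (auto simp: Inv_def)
    then show False using alpha_pos not_both by auto
  qed
  have inj: "inj_on (refl (alpha i)) (Inv ?w)" by (metis inj_onI refl_refl)
  have "Inv (?w \<circ> refl (alpha i)) = insert (alpha i) (refl (alpha i) ` Inv ?w)"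
    using sup Inv_sub by blast
  then show ?thesis using ni card_image[OF inj] by (simp add: finite_Inv)
qed

lemma Inv_card_le: "card (Inv (wprod alpha xs)) \<le> length xs"
proof (induction xs rule: rev_induct)
  case Nil
  have "Inv (\<lambda>a. a) = {}" by (auto simp: Inv_def)
  then show ?case by simp
next
  case (snoc x xs)
  then show ?case using Inv_le[of xs x] by (simp only: wprod_snoc length_append_singleton)
qed

lemma Inv_card_red: "reduced_word alpha xs \<Longrightarrow> card (Inv (wprod alpha xs)) = length xs"
proof (induction xs rule: rev_induct)
  case Nil
  have "Inv (\<lambda>a. a) = {}" by (auto simp: Inv_def)
  then show ?case by simp
next
  case (snoc x xs)
  have "reduced_word alpha xs" using reduced_prefix snoc.prems by blast
  then show ?case using snoc Inv_eq[OF reduced_snoc_pos[OF snoc.prems]] by (simp only: wprod_snoc length_append_singleton)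
qed

lemma id_thm:
  assumes "\<forall>b\<in>Pos. wprod alpha xs b \<in> Pos" shows "wprod alpha xs = id"
proof -
  obtain zs where z: "length zs = wlength alpha (wprod alpha xs)" "wprod alpha zs = wprod alpha xs"
    using wlength_ex by blast
  have red: "reduced_word alpha zs" using z by (simp add: reduced_word_def)
  show ?thesis
  proof (cases zs rule: rev_exhaust)
    case Nil then show ?thesis using z by simp
  next
    case (snoc ys i)
    have p: "wprod alpha ys (alpha i) \<in> Pos" using reduced_snoc_pos red snoc by simp
    have "wprod alpha xs (alpha i) = - wprod alpha ys (alpha i)"
      using z(2)[symmetric] snoc by (simp add: wprod_snoc refl_self wprod_neg)
    then have "- wprod alpha ys (alpha i) \<in> Pos" using assms alpha_pos by metis
    then show ?thesis using p not_both by blast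
  qed
qed

end


context RS begin

lemma longest_neg:
  assumes red: "reduced_word alpha xs" and lon: "longest_element alpha (wprod alpha xs)"
  shows "wprod alpha xs (alpha i) \<notin> Pos"
proof
  assume p: "wprod alpha xs (alpha i) \<in> Pos"
  have c1: "card (Inv (wprod alpha (xs @ [i]))) = length xs + 1"
    using Inv_eq[OF p] Inv_card_red[OF red] by (simp only: wprod_snoc)
  obtain zs where z: "length zs = wlength alpha (wprod alpha (xs @ [i]))" "wprod alpha zs = wprod alpha (xs @ [i])"
    using wlength_ex by blast
  have "wprod alpha (xs @ [i]) \<in> weyl alpha" by (simp add: weyl_def)
  then have "wlength alpha (wprod alpha (xs @ [i])) \<le> wlength alpha (wprod alpha xs)"
    using lon by (simp add: longest_element_def)
  also have "\<dots> = length xs" using red by (simp add: reduced_word_def)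
  finally have "card (Inv (wprod alpha zs)) \<le> length xs" using Inv_card_le[of zs] z by simp
  then show False using c1 z by simp
qed

lemma lin_pos:
  assumes f: "linear f" and fa: "\<And>i. f (alpha i) \<in> Pos" and b: "b \<in> Pos" and fR: "f b \<in> R"
  shows "f b \<in> Pos"
proof -
  obtain c where c: "b = (\<Sum>i\<in>UNIV. c i *\<^sub>R alpha i)" "\<forall>i. c i \<ge> 0"
    using b by (auto simp: pos_roots_def)
  have "\<forall>i. \<exists>d. f (alpha i) = (\<Sum>j\<in>UNIV. d j *\<^sub>R alpha j) \<and> (\<forall>j. d j \<ge> 0)"
    using fa by (auto simp: pos_roots_def)
  then obtain d where d: "\<And>i. f (alpha i) = (\<Sum>j\<in>UNIV. d i j *\<^sub>R alpha j)" "\<And>i j. d i j \<ge> 0"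
    by metis
  have "f b = (\<Sum>i\<in>UNIV. c i *\<^sub>R f (alpha i))"
    unfolding c(1) linear_sum[OF f] o_def linear_scale[OF f] ..
  also have "\<dots> = (\<Sum>i\<in>UNIV. \<Sum>j\<in>UNIV. (c i * d i j) *\<^sub>R alpha j)"
    unfolding d(1) scaleR_sum_right scaleR_scaleR ..
  also have "\<dots> = (\<Sum>j\<in>UNIV. (\<Sum>i\<in>UNIV. c i * d i j) *\<^sub>R alpha j)"
    unfolding scaleR_sum_left by (rule sum.swap)
  finally have e: "f b = (\<Sum>j\<in>UNIV. (\<Sum>i\<in>UNIV. c i * d i j) *\<^sub>R alpha j)" .
  have "\<forall>j. (\<Sum>i\<in>UNIV. c i * d i j) \<ge> 0" using c(2) d(2) by (simp add: sum_nonneg)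
  then show ?thesis using posI[OF fR e] by blast
qed

lemma w0_invol:
  assumes red: "reduced_word alpha xs" and lon: "longest_element alpha (wprod alpha xs)"
  shows "wprod alpha xs \<circ> wprod alpha xs = id"
proof -
  let ?w = "wprod alpha xs"
  define f where "f = (\<lambda>x. - ?w x)"
  have fl: "linear f" unfolding f_def by (rule linear_compose_neg[OF wprod_linear])
  have fR: "\<And>b. b \<in> R \<Longrightarrow> f b \<in> R" unfolding f_def using neg_R wprod_R by blast
  have fa: "f (alpha i) \<in> Pos" for i
    using dich[OF wprod_R[OF alpha_R]] longest_neg[OF red lon] unfolding f_def by blast
  have fP: "\<And>b. b \<in> Pos \<Longrightarrow> f b \<in> Pos" using lin_pos[OF fl fa] fR pos_R by blast
  have "\<forall>b\<in>Pos. wprod alpha (xs @ xs) b \<in> Pos"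
  proof
    fix b assume "b \<in> Pos"
    then have "f (f b) \<in> Pos" using fP by blast
    moreover have "f (f b) = ?w (?w b)" unfolding f_def by (simp add: wprod_neg)
    ultimately show "wprod alpha (xs @ xs) b \<in> Pos" by (simp add: wprod_append)
  qed
  from id_thm[OF this] show ?thesis by (simp add: wprod_append)
qed

end

lemma rprod_step:
  assumes "k \<le> N"
  shows "rprod alpha ii k N = rprod alpha ii (Suc k) N \<circ> refl (alpha (ii k))"
proof -
  have "[k..<Suc N] = k # [Suc k..<Suc N]" using assms by (simp add: upt_rec)
  then show ?thesis unfolding rprod_def by (simp add: wprod_snoc)
qed

lemma rprod_empty: "rprod alpha ii (Suc N) N = id" by (simp add: rprod_def)

theorem mainTheorem3:
  fixes R :: "'a::euclidean_space set"
    and alpha :: "'i::finite \<Rightarrow> 'a"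
    and ii :: "nat \<Rightarrow> 'i" and N :: nat
    and w' :: "'a \<Rightarrow> 'a"
    and typeA :: "nat \<Rightarrow> bool"
    and pi sigma :: "nat \<Rightarrow> 'a \<Rightarrow> 'a"
  assumes "root_system R" and "irreducible_rs R" and "simple_system R alpha"
    and "reduced_word alpha (map ii [1..<Suc N])"
    and "longest_element alpha (wprod alpha (map ii [1..<Suc N]))"
    and "w' \<in> weyl alpha"
    and "pi (Suc N) = w'"
    and "\<And>k. 1 \<le> k \<Longrightarrow> k \<le> N \<Longrightarrow>
           pi k = (if typeA k then refl (gamma alpha ii N k) \<circ> pi (Suc k) else pi (Suc k))"
    and "sigma (Suc N) = w'"
    and "\<And>k. 1 \<le> k \<Longrightarrow> k \<le> N \<Longrightarrow>
           sigma k = (if typeA k then sigma (Suc k) else refl (alpha (ii k)) \<circ> sigma (Suc k))"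
  shows "(\<forall>k\<in>{1..Suc N}. pi k = rprod alpha ii k N \<circ> sigma k)
         \<and> pi 1 = wprod alpha (map ii [1..<Suc N]) \<circ> sigma 1"
proof -
  interpret RS R alpha using assms(1,3) by unfold_locales
  have main: "pi k = rprod alpha ii k N \<circ> sigma k" if k: "1 \<le> k" "k \<le> Suc N" for k
    using k(2)
  proof (induction k rule: inc_induct)
    case base
    then show ?case using assms(7,9) by (simp add: rprod_empty)
  next
    case (step n)
    have n1: "1 \<le> n" "n \<le> N" using k(1) step.hyps by auto
    let ?W = "rprod alpha ii (Suc n) N"
    let ?s = "refl (alpha (ii n))"
    have rs: "rprod alpha ii n N = ?W \<circ> ?s" using rprod_step n1(2) by blast
    show ?case
    proof (cases "typeA n")
      case True
      have g: "gamma alpha ii N n = ?W (alpha (ii n))" by (simp add: gamma_def)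
      have c: "refl (?W (alpha (ii n))) \<circ> ?W = ?W \<circ> ?s"
        unfolding rprod_def by (rule refl_conj[OF wprod_linear wprod_inner])
      have "pi n = refl (gamma alpha ii N n) \<circ> pi (Suc n)" using assms(8)[OF n1] True by simp
      also have "\<dots> = refl (?W (alpha (ii n))) \<circ> (?W \<circ> sigma (Suc n))" by (simp only: step.IH g)
      also have "\<dots> = ?W \<circ> ?s \<circ> sigma n" using c assms(10)[OF n1] True by (simp add: o_assoc)
      finally show ?thesis using rs by simp
    next
      case False
      have "pi n = pi (Suc n)" using assms(8)[OF n1] False by simp
      also have "\<dots> = ?W \<circ> sigma (Suc n)" by (rule step.IH)
      also have "\<dots> = ?W \<circ> (?s \<circ> ?s) \<circ> sigma (Suc n)" by (simp add: refl_comp)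
      also have "\<dots> = ?W \<circ> ?s \<circ> sigma n" using assms(10)[OF n1] False by (simp add: o_assoc)
      finally show ?thesis using rs by simp
    qed
  qed
  let ?xs = "map ii [1..<Suc N]"
  have inv: "wprod alpha ?xs \<circ> wprod alpha ?xs = id" by (rule w0_invol[OF assms(4,5)])
  have r1: "rprod alpha ii 1 N = wprod alpha (rev ?xs)" by (simp add: rprod_def)
  have "rprod alpha ii 1 N = wprod alpha (rev ?xs) \<circ> (wprod alpha ?xs \<circ> wprod alpha ?xs)"
    using r1 inv by simp
  also have "\<dots> = wprod alpha ?xs" by (simp only: o_assoc wprod_rev_inv id_o)
  finally have "rprod alpha ii 1 N = wprod alpha ?xs" .
  then show ?thesis using main[of 1] main by auto
qed

end
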